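(* Let $\varepsilon>0$. Let $(G,\sigma)$ be a finite connected signed graph satisfying $CD^{\sigma}(K,N)$ with $K\in\mathbb{R}$ and $N\in(0,\infty]$ such that $N>\frac{4}{(2+\varepsilon)^2}$, and let $\lambda^{\sigma}$ be a nonzero eigenvalue of $\Delta^\sigma$. Then \[ \lambda^{\sigma}\geq\frac{\varepsilon}{(2+\varepsilon)^{2}-\frac{4}{N}}\cdot\frac{1}{d(D+1)\lceil (D+1)/2\rceil}+\frac{2(2+\varepsilon)}{(2+\varepsilon)^{2}-\frac{4}{N}}K, \] where $d$ is the maximal vertex degree and $D$ the diameter of $G$. Moreover, if the multiplicity of $\lambda^\sigma$ is at least $2$ or $(G,\sigma)$ is balanced, then \[ \lambda^{\sigma}\geq\frac{\varepsilon}{(2+\varepsilon)^{2}-\frac{4}{N}}\cdot\frac{1}{dD\lceil D/2\rceil}+\frac{2(2+\varepsilon)}{(2+\varepsilon)^{2}-\frac{4}{N}}K. \] (Convention $\frac1N=0$ if $N=\infty$.)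
   Context: $G=(V,E)$ is a finite simple connected graph with degrees $d_x$; $\sigma:E\to\{\pm1\}$, $\sigma_{xy}=\sigma(\{x,y\})$. $(G,\sigma)$ is balanced if the product of signs along every cycle is $+1$. Signed Laplacian $\Delta^{\sigma}f(x)=\frac{1}{d_x}\sum_{y\sim x}(\sigma_{xy}f(y)-f(x))$; $\Delta$ is the case $\sigma\equiv+1$; $\lambda$ is an eigenvalue of $\Delta^\sigma$ if $-\Delta^\sigma f=\lambda f$ for some nonzero $f$. $\Gamma^{\sigma}(f,g)=\frac12\{\Delta(fg)-g\Delta^{\sigma}f-f\Delta^{\sigma}g\}$, $\Gamma_2^{\sigma}(f,g)=\frac12\{\Delta\Gamma^{\sigma}(f,g)-\Gamma^{\sigma}(g,\Delta^{\sigma}f)-\Gamma^{\sigma}(f,\Delta^{\sigma}g)\}$. $CD^{\sigma}(K,N)$ means $\Gamma_2^{\sigma}(f,f)(x)\ge\frac1N(\Delta^\sigma f)^2(x)+K\Gamma^\sigma(f,f)(x)$ for all $f:V\to\mathbb{R}$ and all $x\in V$. $\lceil\cdot\rceil$ is the ceiling function. *)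

theory Defs
  imports "HOL-Analysis.Analysis"
begin

definition simple_graph :: "'a set \<Rightarrow> ('a \<Rightarrow> 'a \<Rightarrow> bool) \<Rightarrow> bool" where
  "simple_graph V E \<longleftrightarrow> finite V \<and> V \<noteq> {} \<and>
     (\<forall>x y. E x y \<longrightarrow> x \<in> V \<and> y \<in> V) \<and>
     (\<forall>x y. E x y \<longrightarrow> E y x) \<and> (\<forall>x. \<not> E x x)"

definition connected_graph :: "'a set \<Rightarrow> ('a \<Rightarrow> 'a \<Rightarrow> bool) \<Rightarrow> bool" where
  "connected_graph V E \<longleftrightarrow> (\<forall>x\<in>V. \<forall>y\<in>V. E\<^sup>*\<^sup>* x y)"

definition signature :: "'a set \<Rightarrow> ('a \<Rightarrow> 'a \<Rightarrow> bool) \<Rightarrow> ('a \<Rightarrow> 'a \<Rightarrow> real) \<Rightarrow> bool" where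
  "signature V E \<sigma> \<longleftrightarrow> (\<forall>x y. E x y \<longrightarrow> \<sigma> x y = \<sigma> y x \<and> (\<sigma> x y = 1 \<or> \<sigma> x y = -1))"

definition nbrs :: "'a set \<Rightarrow> ('a \<Rightarrow> 'a \<Rightarrow> bool) \<Rightarrow> 'a \<Rightarrow> 'a set" where
  "nbrs V E x = {y \<in> V. E x y}"

definition deg :: "'a set \<Rightarrow> ('a \<Rightarrow> 'a \<Rightarrow> bool) \<Rightarrow> 'a \<Rightarrow> nat" where
  "deg V E x = card (nbrs V E x)"

definition max_deg :: "'a set \<Rightarrow> ('a \<Rightarrow> 'a \<Rightarrow> bool) \<Rightarrow> nat" where
  "max_deg V E = Max (deg V E ` V)"

definition gdist :: "'a set \<Rightarrow> ('a \<Rightarrow> 'a \<Rightarrow> bool) \<Rightarrow> 'a \<Rightarrow> 'a \<Rightarrow> nat" where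
  "gdist V E x y = (LEAST n. (E ^^ n) x y)"

definition diameter :: "'a set \<Rightarrow> ('a \<Rightarrow> 'a \<Rightarrow> bool) \<Rightarrow> nat" where
  "diameter V E = Max {gdist V E x y | x y. x \<in> V \<and> y \<in> V}"

definition slap :: "'a set \<Rightarrow> ('a \<Rightarrow> 'a \<Rightarrow> bool) \<Rightarrow> ('a \<Rightarrow> 'a \<Rightarrow> real) \<Rightarrow> ('a \<Rightarrow> real) \<Rightarrow> 'a \<Rightarrow> real" where
  "slap V E \<sigma> f x = (1 / real (deg V E x)) * (\<Sum>y\<in>nbrs V E x. \<sigma> x y * f y - f x)"

definition lap :: "'a set \<Rightarrow> ('a \<Rightarrow> 'a \<Rightarrow> bool) \<Rightarrow> ('a \<Rightarrow> real) \<Rightarrow> 'a \<Rightarrow> real" where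
  "lap V E f = slap V E (\<lambda>_ _. 1) f"

definition sGamma :: "'a set \<Rightarrow> ('a \<Rightarrow> 'a \<Rightarrow> bool) \<Rightarrow> ('a \<Rightarrow> 'a \<Rightarrow> real) \<Rightarrow> ('a \<Rightarrow> real) \<Rightarrow> ('a \<Rightarrow> real) \<Rightarrow> 'a \<Rightarrow> real" where
  "sGamma V E \<sigma> f g x = (1/2) * (lap V E (\<lambda>z. f z * g z) x
      - g x * slap V E \<sigma> f x - f x * slap V E \<sigma> g x)"

definition sGamma2 :: "'a set \<Rightarrow> ('a \<Rightarrow> 'a \<Rightarrow> bool) \<Rightarrow> ('a \<Rightarrow> 'a \<Rightarrow> real) \<Rightarrow> ('a \<Rightarrow> real) \<Rightarrow> ('a \<Rightarrow> real) \<Rightarrow> 'a \<Rightarrow> real" where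
  "sGamma2 V E \<sigma> f g x = (1/2) * (lap V E (sGamma V E \<sigma> f g) x
      - sGamma V E \<sigma> g (slap V E \<sigma> f) x - sGamma V E \<sigma> f (slap V E \<sigma> g) x)"

definition invN :: "ereal \<Rightarrow> real" where
  "invN N = (if N = \<infinity> then 0 else 1 / real_of_ereal N)"

definition CD :: "'a set \<Rightarrow> ('a \<Rightarrow> 'a \<Rightarrow> bool) \<Rightarrow> ('a \<Rightarrow> 'a \<Rightarrow> real) \<Rightarrow> real \<Rightarrow> ereal \<Rightarrow> bool" where
  "CD V E \<sigma> K N \<longleftrightarrow> (\<forall>f. \<forall>x\<in>V.
      sGamma2 V E \<sigma> f f x \<ge> invN N * (slap V E \<sigma> f x)\<^sup>2 + K * sGamma V E \<sigma> f f x)"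

definition eigenspace :: "'a set \<Rightarrow> ('a \<Rightarrow> 'a \<Rightarrow> bool) \<Rightarrow> ('a \<Rightarrow> 'a \<Rightarrow> real) \<Rightarrow> real \<Rightarrow> ('a \<Rightarrow> real) set" where
  "eigenspace V E \<sigma> mu = {f. (\<forall>x. x \<notin> V \<longrightarrow> f x = 0) \<and> (\<forall>x\<in>V. - slap V E \<sigma> f x = mu * f x)}"

definition is_eigenvalue :: "'a set \<Rightarrow> ('a \<Rightarrow> 'a \<Rightarrow> bool) \<Rightarrow> ('a \<Rightarrow> 'a \<Rightarrow> real) \<Rightarrow> real \<Rightarrow> bool" where
  "is_eigenvalue V E \<sigma> mu \<longleftrightarrow> (\<exists>f\<in>eigenspace V E \<sigma> mu. f \<noteq> (\<lambda>_. 0))"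

text \<open>Multiplicity (dimension of the eigenspace; Delta^sigma is self-adjoint, so
geometric = algebraic multiplicity) is at least 2.\<close>
definition mult_ge2 :: "'a set \<Rightarrow> ('a \<Rightarrow> 'a \<Rightarrow> bool) \<Rightarrow> ('a \<Rightarrow> 'a \<Rightarrow> real) \<Rightarrow> real \<Rightarrow> bool" where
  "mult_ge2 V E \<sigma> mu \<longleftrightarrow> (\<exists>f\<in>eigenspace V E \<sigma> mu. \<exists>g\<in>eigenspace V E \<sigma> mu.
      \<forall>a b::real. (\<forall>x. a * f x + b * g x = 0) \<longrightarrow> a = 0 \<and> b = 0)"

definition is_cycle :: "'a set \<Rightarrow> ('a \<Rightarrow> 'a \<Rightarrow> bool) \<Rightarrow> 'a list \<Rightarrow> bool" where
  "is_cycle V E cs \<longleftrightarrow> length cs \<ge> 3 \<and> distinct cs \<and> set cs \<subseteq> V \<and>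
     (\<forall>i < length cs. E (cs ! i) (cs ! ((i + 1) mod length cs)))"

definition balanced :: "'a set \<Rightarrow> ('a \<Rightarrow> 'a \<Rightarrow> bool) \<Rightarrow> ('a \<Rightarrow> 'a \<Rightarrow> real) \<Rightarrow> bool" where
  "balanced V E \<sigma> \<longleftrightarrow> (\<forall>cs. is_cycle V E cs \<longrightarrow>
     (\<Prod>i<length cs. \<sigma> (cs ! i) (cs ! ((i + 1) mod length cs))) = 1)"

end

theory Submission
  imports Defs
begin

locale sg =
  fixes V :: "'a set" and E :: "'a \<Rightarrow> 'a \<Rightarrow> bool" and \<sigma> :: "'a \<Rightarrow> 'a \<Rightarrow> real"
  assumes sgr: "simple_graph V E" and sig: "signature V E \<sigma>"
begin

lemma finV: "finite V" using sgr by (simp add: simple_graph_def)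
lemma Vne: "V \<noteq> {}" using sgr by (simp add: simple_graph_def)
lemma EV: "E x y \<Longrightarrow> x \<in> V \<and> y \<in> V" using sgr by (simp add: simple_graph_def)
lemma Esym: "E x y \<Longrightarrow> E y x" using sgr by (simp add: simple_graph_def)
lemma Eirr: "\<not> E x x" using sgr by (simp add: simple_graph_def)
lemma sig_sym: "E x y \<Longrightarrow> \<sigma> x y = \<sigma> y x" using sig unfolding signature_def by blast
lemma sig_pm: "E x y \<Longrightarrow> \<sigma> x y = 1 \<or> \<sigma> x y = -1" using sig unfolding signature_def by blast
lemma sig_sq: "E x y \<Longrightarrow> \<sigma> x y * \<sigma> x y = 1" using sig_pm by fastforce
lemma sig_abs: "E x y \<Longrightarrow> \<bar>\<sigma> x y\<bar> = 1" using sig_pm by fastforce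

lemma nbrs_fin: "finite (nbrs V E x)" using finV by (simp add: nbrs_def)
lemma nbrs_out: "x \<notin> V \<Longrightarrow> nbrs V E x = {}" using EV by (auto simp: nbrs_def)
lemma nbrs_iff: "y \<in> nbrs V E x \<longleftrightarrow> E x y" using EV by (auto simp: nbrs_def)

lemma slap_lin: "slap V E \<sigma> (\<lambda>z. c * g z) x = c * slap V E \<sigma> g x"
proof -
  have "(\<Sum>y\<in>nbrs V E x. \<sigma> x y * (c * g y) - c * g x) = c * (\<Sum>y\<in>nbrs V E x. \<sigma> x y * g y - g x)"
    by (simp add: sum_distrib_left algebra_simps)
  then show ?thesis by (simp add: slap_def)
qed

lemma lap_lin: "lap V E (\<lambda>z. c * g z) x = c * lap V E g x"
proof -
  have "(\<Sum>y\<in>nbrs V E x. 1 * (c * g y) - c * g x) = c * (\<Sum>y\<in>nbrs V E x. 1 * g y - g x)"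
    by (simp add: sum_distrib_left algebra_simps)
  then show ?thesis by (simp add: lap_def slap_def)
qed

lemma lap_add: "lap V E (\<lambda>z. g z + h z) x = lap V E g x + lap V E h x"
proof -
  have "(\<Sum>y\<in>nbrs V E x. 1 * (g y + h y) - (g x + h x)) = (\<Sum>y\<in>nbrs V E x. 1 * g y - g x) + (\<Sum>y\<in>nbrs V E x. 1 * h y - h x)"
    by (simp add: sum.distrib[symmetric] algebra_simps)
  then show ?thesis by (simp add: lap_def slap_def algebra_simps)
qed

lemma Gamma_ff: "sGamma V E \<sigma> f f x =
   (1 / (2 * real (deg V E x))) * (\<Sum>y\<in>nbrs V E x. (\<sigma> x y * f y - f x)\<^sup>2)"
proof -
  have "\<And>y. y \<in> nbrs V E x \<Longrightarrow> (f y * f y - f x * f x) - 2 * f x * (\<sigma> x y * f y - f x)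
           = (\<sigma> x y * f y - f x)\<^sup>2"
  proof -
    fix y assume "y \<in> nbrs V E x"
    then have "\<sigma> x y * \<sigma> x y = 1" using sig_sq nbrs_iff by blast
    then show "(f y * f y - f x * f x) - 2 * f x * (\<sigma> x y * f y - f x) = (\<sigma> x y * f y - f x)\<^sup>2"
      by (simp add: power2_eq_square algebra_simps)
  qed
  then have "(\<Sum>y\<in>nbrs V E x. f y * f y - f x * f x) - 2 * f x * (\<Sum>y\<in>nbrs V E x. \<sigma> x y * f y - f x)
       = (\<Sum>y\<in>nbrs V E x. (\<sigma> x y * f y - f x)\<^sup>2)"
    by (simp add: sum_distrib_left sum_subtractf[symmetric])
  moreover have "1 / (2 * real (deg V E x)) = (1/2) * (1 / real (deg V E x))" by simp
  ultimately show ?thesis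
    unfolding sGamma_def lap_def slap_def by (simp only: mult_1) (simp add: algebra_simps)
qed

lemma Gamma_nonneg: "sGamma V E \<sigma> f f x \<ge> 0"
  unfolding Gamma_ff by (intro mult_nonneg_nonneg sum_nonneg) auto

end

locale eig = sg +
  fixes f :: "'a \<Rightarrow> real" and lam :: real
  assumes fE: "f \<in> eigenspace V E \<sigma> lam"
begin

abbreviation "Gam \<equiv> sGamma V E \<sigma> f f"

lemma f_out: "x \<notin> V \<Longrightarrow> f x = 0" using fE by (simp add: eigenspace_def)

lemma slap_f_pt: "slap V E \<sigma> f x = - lam * f x"
proof (cases "x \<in> V")
  case True
  then have "- slap V E \<sigma> f x = lam * f x" using fE by (simp add: eigenspace_def)
  then show ?thesis by linarith
next
  case False then show ?thesis using f_out nbrs_out by (simp add: slap_def)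
qed

lemma slap_f: "slap V E \<sigma> f = (\<lambda>z. - lam * f z)"
  using slap_f_pt by auto

lemma lap_fsq: "lap V E (\<lambda>z. f z * f z) x = 2 * Gam x - 2 * lam * (f x)\<^sup>2"
  unfolding sGamma_def slap_f_pt by (simp add: power2_eq_square algebra_simps)

lemma Gam_slap: "sGamma V E \<sigma> f (slap V E \<sigma> f) x = - lam * Gam x"
proof -
  have "lap V E (\<lambda>z. f z * (- lam * f z)) x = (- lam) * lap V E (\<lambda>z. f z * f z) x"
    using lap_lin[of "- lam" "\<lambda>z. f z * f z" x] by (simp add: algebra_simps)
  moreover have "slap V E \<sigma> (\<lambda>z. - lam * f z) x = (- lam) * slap V E \<sigma> f x"
    using slap_lin by blast
  ultimately show ?thesis unfolding slap_f sGamma_def by (simp add: algebra_simps)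
qed

lemma Gamma2_f: "sGamma2 V E \<sigma> f f x = 1/2 * lap V E Gam x + lam * Gam x"
  unfolding sGamma2_def Gam_slap by (simp add: algebra_simps)

lemma maxprinc:
  assumes cd: "CD V E \<sigma> K N"
  shows "\<exists>x0\<in>V. (\<forall>x\<in>V. Gam x + \<beta> * (f x)\<^sup>2 \<le> Gam x0 + \<beta> * (f x0)\<^sup>2) \<and>
     (lam - K - \<beta>) * Gam x0 \<ge> lam * (invN N * lam - \<beta>) * (f x0)\<^sup>2"
proof -
  define F where "F = (\<lambda>z. Gam z + \<beta> * (f z * f z))"
  have "Max (F ` V) \<in> F ` V" using finV Vne by simp
  then obtain x0 where x0: "x0 \<in> V" "F x0 = Max (F ` V)" by (metis imageE)
  have xmax: "\<forall>x\<in>V. F x \<le> F x0" using x0 finV by auto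
  have "lap V E F x0 = (1 / real (deg V E x0)) * (\<Sum>y\<in>nbrs V E x0. 1 * F y - F x0)"
    by (simp add: lap_def slap_def)
  also have "\<dots> \<le> 0"
  proof (rule mult_nonneg_nonpos)
    show "0 \<le> 1 / real (deg V E x0)" by simp
    show "(\<Sum>y\<in>nbrs V E x0. 1 * F y - F x0) \<le> 0"
      by (rule sum_nonpos) (use xmax in \<open>auto simp: nbrs_def\<close>)
  qed
  finally have lF: "lap V E F x0 \<le> 0" .
  have "lap V E F x0 = lap V E Gam x0 + \<beta> * lap V E (\<lambda>z. f z * f z) x0"
    unfolding F_def lap_add lap_lin by simp
  then have lF2: "lap V E Gam x0 + \<beta> * (2 * Gam x0 - 2 * lam * (f x0)\<^sup>2) \<le> 0"
    using lF lap_fsq by simp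
  have "sGamma2 V E \<sigma> f f x0 \<ge> invN N * (slap V E \<sigma> f x0)\<^sup>2 + K * Gam x0"
    using cd x0(1) by (simp add: CD_def)
  then have c2: "1/2 * lap V E Gam x0 + lam * Gam x0 \<ge> invN N * (lam\<^sup>2 * (f x0)\<^sup>2) + K * Gam x0"
    unfolding Gamma2_f slap_f_pt by (simp add: power_mult_distrib)
  have "(lam - K - \<beta>) * Gam x0 - lam * (invN N * lam - \<beta>) * (f x0)\<^sup>2
     = (1/2 * lap V E Gam x0 + lam * Gam x0 - (invN N * (lam\<^sup>2 * (f x0)\<^sup>2) + K * Gam x0))
       - 1/2 * (lap V E Gam x0 + \<beta> * (2 * Gam x0 - 2 * lam * (f x0)\<^sup>2))"
    by (simp add: algebra_simps power2_eq_square)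
  also have "\<dots> \<ge> 0"
  proof -
    have gen: "\<And>a b c::real. b \<le> a \<Longrightarrow> c \<le> 0 \<Longrightarrow> 0 \<le> a - b - 1/2 * c" by linarith
    show ?thesis by (rule gen[OF c2 lF2])
  qed
  finally have main: "(lam - K - \<beta>) * Gam x0 \<ge> lam * (invN N * lam - \<beta>) * (f x0)\<^sup>2" by linarith
  show ?thesis
    using x0(1) xmax main unfolding F_def by (auto simp: power2_eq_square)
qed

end

locale eig2 = eig +
  assumes fne: "\<exists>x\<in>V. f x \<noteq> 0" and lamne: "lam \<noteq> 0"
begin

definition "M = Max ((\<lambda>x. (f x)\<^sup>2) ` V)"

lemma fsq_le_M: "x \<in> V \<Longrightarrow> (f x)\<^sup>2 \<le> M"
  unfolding M_def using finV by auto


lemma M_attained: "\<exists>x\<in>V. (f x)\<^sup>2 = M"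
proof -
  have "M \<in> (\<lambda>x. (f x)\<^sup>2) ` V" unfolding M_def using finV Vne by simp
  then show ?thesis by auto
qed

lemma M_pos: "M > 0"
proof -
  obtain x where "x \<in> V" "f x \<noteq> 0" using fne by auto
  then have "0 < (f x)\<^sup>2" by simp
  then show ?thesis using fsq_le_M[OF \<open>x \<in> V\<close>] by linarith
qed

lemma fsq_le_M': "(f x)\<^sup>2 \<le> M"
proof (cases "x \<in> V")
  case True then show ?thesis by (rule fsq_le_M)
next
  case False then show ?thesis using f_out M_pos by simp
qed

lemma slap_zero_if_Gam_zero:
  assumes "Gam x = 0" shows "slap V E \<sigma> f x = 0"
proof (cases "deg V E x = 0")
  case True then show ?thesis by (simp add: slap_def)
next
  case False
  then have "(\<Sum>y\<in>nbrs V E x. (\<sigma> x y * f y - f x)\<^sup>2) = 0"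
    using assms unfolding Gamma_ff by simp
  then have "\<forall>y\<in>nbrs V E x. (\<sigma> x y * f y - f x)\<^sup>2 = 0"
    using sum_nonneg_eq_0_iff[of "nbrs V E x" "\<lambda>y. (\<sigma> x y * f y - f x)\<^sup>2"] nbrs_fin by simp
  then have "(\<Sum>y\<in>nbrs V E x. \<sigma> x y * f y - f x) = 0" by simp
  then show ?thesis by (simp add: slap_def)
qed

lemma Gam_pos: "f x \<noteq> 0 \<Longrightarrow> Gam x > 0"
proof -
  assume fx: "f x \<noteq> 0"
  have "Gam x \<noteq> 0"
  proof
    assume "Gam x = 0"
    then have "slap V E \<sigma> f x = 0" by (rule slap_zero_if_Gam_zero)
    then show False using fx lamne slap_f_pt[of x] by simp
  qed
  then show ?thesis using Gamma_nonneg[of f x] by linarith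
qed

lemma lam_pos: "lam > 0"
proof -
  obtain xs where xs: "xs \<in> V" "(f xs)\<^sup>2 = M" using M_attained by auto
  have eq: "f xs * (\<Sum>y\<in>nbrs V E xs. \<sigma> xs y * f y - f xs) = (\<Sum>y\<in>nbrs V E xs. \<sigma> xs y * f y * f xs - (f xs)\<^sup>2)"
    unfolding sum_distrib_left by (rule sum.cong) (simp_all add: power2_eq_square algebra_simps)
  have "f xs * slap V E \<sigma> f xs = (1 / real (deg V E xs)) * (f xs * (\<Sum>y\<in>nbrs V E xs. \<sigma> xs y * f y - f xs))"
    unfolding slap_def by (simp only: mult.left_commute)
  also have "\<dots> = (1 / real (deg V E xs)) * (\<Sum>y\<in>nbrs V E xs. \<sigma> xs y * f y * f xs - (f xs)\<^sup>2)"
    using eq by simp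
  also have "\<dots> \<le> 0"
  proof (rule mult_nonneg_nonpos)
    show "0 \<le> 1 / real (deg V E xs)" by simp
    show "(\<Sum>y\<in>nbrs V E xs. \<sigma> xs y * f y * f xs - (f xs)\<^sup>2) \<le> 0"
    proof (rule sum_nonpos)
      fix y assume y: "y \<in> nbrs V E xs"
      then have "E xs y" by (simp add: nbrs_iff)
      have "(f y)\<^sup>2 \<le> (f xs)\<^sup>2" using xs fsq_le_M' by simp
      then have "\<bar>f y\<bar> \<le> \<bar>f xs\<bar>" by (simp add: abs_le_square_iff)
      then have "\<bar>f y\<bar> * \<bar>f xs\<bar> \<le> \<bar>f xs\<bar> * \<bar>f xs\<bar>" by (rule mult_right_mono) simp
      moreover have "\<sigma> xs y * f y * f xs \<le> \<bar>\<sigma> xs y * f y * f xs\<bar>" by simp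
      moreover have "\<bar>\<sigma> xs y * f y * f xs\<bar> = \<bar>f y\<bar> * \<bar>f xs\<bar>"
        using sig_abs[OF \<open>E xs y\<close>] by (simp add: abs_mult)
      moreover have "\<bar>f xs\<bar> * \<bar>f xs\<bar> = (f xs)\<^sup>2" by (simp add: power2_eq_square abs_mult[symmetric])
      ultimately show "\<sigma> xs y * f y * f xs - (f xs)\<^sup>2 \<le> 0" by linarith
    qed
  qed
  finally have "f xs * slap V E \<sigma> f xs \<le> 0" .
  moreover have "f xs * slap V E \<sigma> f xs = - lam * (f xs)\<^sup>2" unfolding slap_f_pt by (simp add: power2_eq_square)
  ultimately have "- lam * M \<le> 0" using xs(2) by simp
  have "lam \<ge> 0"
  proof (rule ccontr)
    assume "\<not> lam \<ge> 0"
    then have "lam * M < 0" using M_pos mult_neg_pos by (simp add: not_le)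
    then show False using \<open>- lam * M \<le> 0\<close> by linarith
  qed
  then show ?thesis using lamne by simp
qed

lemma invN_nonneg: "N > 0 \<Longrightarrow> invN N \<ge> 0"
  by (cases N) (auto simp: invN_def)

lemma s_nonneg:
  assumes cd: "CD V E \<sigma> K N" and Npos: "N > 0"
  shows "lam * (1 - invN N) - K \<ge> 0"
proof (rule ccontr)
  define \<iota> where "\<iota> = invN N"
  have io: "\<iota> \<ge> 0" using invN_nonneg[OF Npos] by (simp add: \<iota>_def)
  assume "\<not> lam * (1 - invN N) - K \<ge> 0"
  then have sneg: "lam * (1 - \<iota>) - K < 0" by (simp add: \<iota>_def)
  obtain xs where xs: "xs \<in> V" "(f xs)\<^sup>2 = M" using M_attained by auto
  obtain x0 where x0: "x0 \<in> V" and H1: "\<forall>x\<in>V. Gam x + (\<iota> * lam) * (f x)\<^sup>2 \<le> Gam x0 + (\<iota> * lam) * (f x0)\<^sup>2"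
     and H2: "(lam - K - \<iota> * lam) * Gam x0 \<ge> lam * (invN N * lam - \<iota> * lam) * (f x0)\<^sup>2"
    using maxprinc[OF cd, of "\<iota> * lam"] by blast
  have "(lam * (1 - \<iota>) - K) * Gam x0 \<ge> 0" using H2 by (simp add: \<iota>_def algebra_simps)
  then have "Gam x0 \<le> 0" using sneg by (simp add: mult_le_0_iff zero_le_mult_iff)
  then have g0: "Gam x0 = 0" using Gamma_nonneg[of f x0] by linarith
  have "Gam xs + (\<iota> * lam) * M \<le> (\<iota> * lam) * (f x0)\<^sup>2" using H1 xs g0 by auto
  also have "\<dots> \<le> (\<iota> * lam) * M"
    using fsq_le_M[OF x0] io lam_pos by (intro mult_left_mono) auto
  finally have "Gam xs \<le> 0" by simp
  moreover have "f xs \<noteq> 0" using xs M_pos by auto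
  ultimately show False using Gam_pos by fastforce
qed

lemma core:
  assumes cd: "CD V E \<sigma> K N" and Npos: "N > 0" and eps: "\<epsilon> > 0"
    and path: "\<exists>x\<in>V. Gam x \<ge> M * G"
  shows "lam * ((2 + \<epsilon>)\<^sup>2 - 4 * invN N) \<ge> 2 * \<epsilon> * G + 2 * (2 + \<epsilon>) * K"
proof -
  define \<iota> where "\<iota> = invN N"
  have io: "\<iota> \<ge> 0" using invN_nonneg[OF Npos] by (simp add: \<iota>_def)
  define s where "s = lam * (1 - \<iota>) - K"
  have s0: "s \<ge> 0" using s_nonneg[OF cd Npos] by (simp add: s_def \<iota>_def)
  have lp: "lam > 0" by (rule lam_pos)
  define t where "t = \<epsilon> * lam / 2"
  have tp: "t > 0" using eps lp by (simp add: t_def)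
  define \<beta> where "\<beta> = \<iota> * lam + s + t"
  have bp: "\<beta> \<ge> 0" using io lp s0 tp by (simp add: \<beta>_def)
  obtain x0 where x0: "x0 \<in> V" and H1: "\<forall>x\<in>V. Gam x + \<beta> * (f x)\<^sup>2 \<le> Gam x0 + \<beta> * (f x0)\<^sup>2"
     and H2: "(lam - K - \<beta>) * Gam x0 \<ge> lam * (invN N * lam - \<beta>) * (f x0)\<^sup>2"
    using maxprinc[OF cd, of \<beta>] by blast
  have e1: "lam - K - \<beta> = - t" by (simp add: \<beta>_def s_def algebra_simps)
  have e2: "invN N * lam - \<beta> = - (s + t)" by (simp add: \<beta>_def \<iota>_def)
  have "- t * Gam x0 \<ge> lam * (- (s + t)) * (f x0)\<^sup>2" using H2 unfolding e1 e2 .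
  moreover have "lam * (- (s + t)) * (f x0)\<^sup>2 = - (lam * (s + t) * (f x0)\<^sup>2)" by (simp only: mult_minus_right mult_minus_left)
  ultimately have A1: "t * Gam x0 \<le> lam * (s + t) * (f x0)\<^sup>2" by linarith
  have "lam * (s + t) * (f x0)\<^sup>2 \<le> lam * (s + t) * M"
    using fsq_le_M[OF x0] lp s0 tp by (intro mult_left_mono) auto
  with A1 have A2: "t * Gam x0 \<le> lam * (s + t) * M" by linarith
  obtain x where x: "x \<in> V" "Gam x \<ge> M * G" using path by blast
  have "Gam x + \<beta> * (f x)\<^sup>2 \<le> Gam x0 + \<beta> * (f x0)\<^sup>2" using H1 x by blast
  moreover have "\<beta> * (f x0)\<^sup>2 \<le> \<beta> * M" using fsq_le_M[OF x0] bp by (intro mult_left_mono) auto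
  moreover have "\<beta> * (f x)\<^sup>2 \<ge> 0" using bp by simp
  ultimately have "M * G \<le> Gam x0 + \<beta> * M" using x by linarith
  then have "t * (M * G) \<le> t * (Gam x0 + \<beta> * M)" using tp by (intro mult_left_mono) auto
  also have "\<dots> \<le> lam * (s + t) * M + t * \<beta> * M" using A2 by (simp add: algebra_simps)
  finally have "M * (t * G) \<le> M * (lam * (s + t) + t * \<beta>)" by (simp add: algebra_simps)
  then have A3: "t * G \<le> lam * (s + t) + t * \<beta>" using M_pos by simp
  have "lam * (\<epsilon> * G) = 2 * (t * G)" by (simp add: t_def)
  also have "\<dots> \<le> 2 * (lam * (s + t) + t * \<beta>)" using A3 by simp
  also have "\<dots> = lam * (2 * s + \<epsilon> * lam + \<epsilon> * (\<iota> * lam + s + \<epsilon> * lam / 2))"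
    by (simp add: t_def \<beta>_def algebra_simps)
  finally have "\<epsilon> * G \<le> 2 * s + \<epsilon> * lam + \<epsilon> * (\<iota> * lam + s + \<epsilon> * lam / 2)"
    using lp by simp
  moreover have "lam * ((2 + \<epsilon>)\<^sup>2 - 4 * invN N) - 2 * (2 + \<epsilon>) * K
      = 2 * (2 * s + \<epsilon> * lam + \<epsilon> * (\<iota> * lam + s + \<epsilon> * lam / 2))"
    by (simp add: s_def \<iota>_def power2_eq_square algebra_simps)
  moreover have "2 * \<epsilon> * G = 2 * (\<epsilon> * G)" by simp
  moreover have gen: "\<And>a b c d e::real. a \<le> b \<Longrightarrow> c - d = 2 * b \<Longrightarrow> e = 2 * a \<Longrightarrow> e + d \<le> c"
    by linarith
  ultimately show ?thesis by blast
qed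

end

lemma exists_ge_avg:
  fixes g :: "nat \<Rightarrow> real"
  assumes "m > 0" and "(\<Sum>k<m. g k) \<ge> S"
  shows "\<exists>k<m. g k \<ge> S / real m"
proof (rule ccontr)
  assume "\<not> (\<exists>k<m. g k \<ge> S / real m)"
  then have "\<forall>k\<in>{..<m}. g k < S / real m" by auto
  then have "(\<Sum>k<m. g k) < (\<Sum>k<m. S / real m)"
    using assms(1) by (intro sum_strict_mono) auto
  also have "\<dots> = S" using assms(1) by simp
  finally show False using assms(2) by linarith
qed

lemma sum_pairs: "(\<Sum>k<m. (g (2*k) + g (2*k+1)) :: real) = (\<Sum>i<2*(m::nat). g i)"
  by (induction m) (simp_all add: algebra_simps)

context sg begin

definition sp :: "(nat \<Rightarrow> 'a) \<Rightarrow> nat \<Rightarrow> real" where "sp p n = (\<Prod>i<n. \<sigma> (p i) (p (Suc i)))"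
definition walk :: "(nat \<Rightarrow> 'a) \<Rightarrow> nat \<Rightarrow> bool" where "walk p n \<longleftrightarrow> (\<forall>i<n. E (p i) (p (Suc i)))"
definition nb :: "(nat \<Rightarrow> 'a) \<Rightarrow> nat \<Rightarrow> bool" where "nb p n \<longleftrightarrow> (\<forall>i. i + 2 \<le> n \<longrightarrow> p i \<noteq> p (i + 2))"

lemma sp_Suc: "sp p (Suc k) = sp p k * \<sigma> (p k) (p (Suc k))"
  by (simp add: sp_def)

lemma sp_abs: "walk p n \<Longrightarrow> k \<le> n \<Longrightarrow> \<bar>sp p k\<bar> = 1"
proof (induction k)
  case 0 then show ?case by (simp add: sp_def)
next
  case (Suc k)
  then have "E (p k) (p (Suc k))" by (simp add: walk_def)
  then show ?case using Suc by (simp add: sp_Suc abs_mult sig_abs)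
qed

lemma walk_V: "walk p n \<Longrightarrow> 0 < j \<Longrightarrow> j \<le> n \<Longrightarrow> p j \<in> V"
proof -
  assume w: "walk p n" and j: "0 < j" "j \<le> n"
  then obtain i where i: "j = Suc i" by (cases j) auto
  then have "E (p i) (p j)" using w j by (simp add: walk_def)
  then show ?thesis using EV by blast
qed

lemma deg_le_max: "x \<in> V \<Longrightarrow> deg V E x \<le> max_deg V E"
  unfolding max_deg_def using finV by simp

end

context eig2 begin

lemma path_gamma:
  assumes w: "walk p n" and nbp: "nb p n" and n1: "n \<ge> 1" and p0: "p 0 = xs"
    and xs: "xs \<in> V" "(f xs)\<^sup>2 = M" and c: "\<bar>c\<bar> = 1" "c * f xs > 0"
    and endp: "c * sp p n * f (p n) \<le> 0"
  shows "\<exists>x\<in>V. Gam x \<ge> M * (1 / (2 * real (max_deg V E) * real n * real ((n + 1) div 2)))"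
proof -
  define e where "e i = \<sigma> (p i) (p (Suc i)) * f (p (Suc i)) - f (p i)" for i
  define h where "h k = c * sp p k * f (p k)" for k
  have hstep: "h k - h (Suc k) = - (c * sp p k) * e k" for k
    by (simp add: h_def e_def sp_Suc algebra_simps)
  have "h 0 - h n = (\<Sum>k<n. h k - h (Suc k))" by (simp add: sum_lessThan_telescope')
  also have "\<dots> \<le> (\<Sum>k<n. \<bar>e k\<bar>)"
  proof (rule sum_mono)
    fix k assume "k \<in> {..<n}"
    then have "\<bar>sp p k\<bar> = 1" using sp_abs[OF w] by simp
    then have "\<bar>- (c * sp p k) * e k\<bar> = \<bar>e k\<bar>" using c(1) by (simp add: abs_mult)
    then show "h k - h (Suc k) \<le> \<bar>e k\<bar>" unfolding hstep by linarith
  qed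
  finally have S1: "h 0 - h n \<le> (\<Sum>k<n. \<bar>e k\<bar>)" .
  have h0: "h 0 = c * f xs" by (simp add: h_def sp_def p0)
  have hn: "h n \<le> 0" using endp by (simp add: h_def)
  have "c * f xs \<le> (\<Sum>k<n. \<bar>e k\<bar>)" using S1 h0 hn by linarith
  then have "(c * f xs)\<^sup>2 \<le> (\<Sum>k<n. \<bar>e k\<bar>)\<^sup>2" using c(2) by (intro power_mono) auto
  moreover have "(c * f xs)\<^sup>2 = M" using c(1) xs(2)
    by (simp add: power_mult_distrib) (metis abs_mult_self_eq power2_eq_square mult_1)
  moreover have "(\<Sum>k<n. \<bar>e k\<bar>)\<^sup>2 \<le> (\<Sum>k<n. (\<bar>e k\<bar>)\<^sup>2) * real n"
    using sum_squared_le_sum_of_squares[of "\<lambda>k. \<bar>e k\<bar>" "{..<n}"] by simp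
  ultimately have S2: "M \<le> (\<Sum>k<n. (e k)\<^sup>2) * real n" by simp
  define b where "b i = (if i < n then (e i)\<^sup>2 else 0)" for i
  define dm where "dm = max_deg V E"
  define cc where "cc = (n + 1) div 2"
  have cc1: "cc > 0" using n1 by (simp add: cc_def)
  have GB: "Gam (p (2*k+1)) \<ge> (b (2*k) + b (2*k+1)) / (2 * real dm)" if k: "k < cc" for k
  proof -
    define j where "j = 2*k+1"
    have jn: "j \<le> n" using k by (simp add: cc_def j_def)
    have jV: "p j \<in> V" using walk_V[OF w _ jn] by (simp add: j_def)
    have Ej: "E (p j) (p (2*k))" using w jn by (simp add: walk_def j_def Esym)
    have t1: "(\<sigma> (p j) (p (2*k)) * f (p (2*k)) - f (p j))\<^sup>2 = b (2*k)"
    proof -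
      have "\<sigma> (p j) (p (2*k)) * \<sigma> (p j) (p (2*k)) = 1" using sig_sq[OF Ej] .
      moreover have "\<sigma> (p j) (p (2*k)) = \<sigma> (p (2*k)) (p (Suc (2*k)))" using sig_sym[OF Ej] by (simp add: j_def)
      ultimately show ?thesis using jn
        by (simp add: b_def e_def j_def power2_eq_square algebra_simps)
    qed
    have dpos: "deg V E (p j) > 0"
    proof -
      have "p (2*k) \<in> nbrs V E (p j)" using Ej by (simp add: nbrs_iff)
      then show ?thesis unfolding deg_def using nbrs_fin card_gt_0_iff by blast
    qed
    have dle: "real (deg V E (p j)) \<le> real dm" using deg_le_max[OF jV] by (simp add: dm_def)
    have sumge: "(\<Sum>y\<in>nbrs V E (p j). (\<sigma> (p j) y * f y - f (p j))\<^sup>2) \<ge> b (2*k) + b (2*k+1)"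
    proof (cases "j < n")
      case True
      have Ej2: "E (p j) (p (Suc j))" using w True by (simp add: walk_def)
      have ne: "p (2*k) \<noteq> p (Suc j)" using nbp True by (simp add: nb_def j_def)
      have sub: "{p (2*k), p (Suc j)} \<subseteq> nbrs V E (p j)" using Ej Ej2 by (simp add: nbrs_iff)
      have "(\<Sum>y\<in>{p (2*k), p (Suc j)}. (\<sigma> (p j) y * f y - f (p j))\<^sup>2)
            \<le> (\<Sum>y\<in>nbrs V E (p j). (\<sigma> (p j) y * f y - f (p j))\<^sup>2)"
        by (rule sum_mono2[OF nbrs_fin sub]) auto
      moreover have "(\<Sum>y\<in>{p (2*k), p (Suc j)}. (\<sigma> (p j) y * f y - f (p j))\<^sup>2) = b (2*k) + b (2*k+1)"
        using ne t1 True by (simp add: b_def e_def j_def)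
      ultimately show ?thesis by simp
    next
      case False
      have sub: "{p (2*k)} \<subseteq> nbrs V E (p j)" using Ej by (simp add: nbrs_iff)
      have "(\<Sum>y\<in>{p (2*k)}. (\<sigma> (p j) y * f y - f (p j))\<^sup>2)
            \<le> (\<Sum>y\<in>nbrs V E (p j). (\<sigma> (p j) y * f y - f (p j))\<^sup>2)"
        by (rule sum_mono2[OF nbrs_fin sub]) auto
      moreover have "b (2*k+1) = 0" using False by (simp add: b_def j_def)
      ultimately show ?thesis using t1 by simp
    qed
    have "(b (2*k) + b (2*k+1)) / (2 * real dm) \<le> (\<Sum>y\<in>nbrs V E (p j). (\<sigma> (p j) y * f y - f (p j))\<^sup>2) / (2 * real dm)"
      using sumge dpos dle by (intro divide_right_mono) auto
    also have "\<dots> \<le> (\<Sum>y\<in>nbrs V E (p j). (\<sigma> (p j) y * f y - f (p j))\<^sup>2) / (2 * real (deg V E (p j)))"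
      using dpos dle by (intro divide_left_mono) (auto intro: sum_nonneg)
    also have "\<dots> = Gam (p j)" unfolding Gamma_ff by simp
    finally show ?thesis by (simp add: j_def)
  qed
  have "(\<Sum>k<n. (e k)\<^sup>2) = (\<Sum>i<n. b i)" by (simp add: b_def)
  also have "\<dots> \<le> (\<Sum>i<2*cc. b i)"
    by (rule sum_mono2) (auto simp: cc_def b_def)
  also have "\<dots> = (\<Sum>k<cc. (b (2*k) + b (2*k+1)))" using sum_pairs[of b cc] by simp
  finally have S3: "(\<Sum>k<n. (e k)\<^sup>2) \<le> (\<Sum>k<cc. (b (2*k) + b (2*k+1)))" .
  have dmpos: "real dm > 0"
  proof -
    have "p 1 \<in> V" using walk_V[OF w _ n1] by simp
    have "E (p 1) (p 0)" using w n1 by (simp add: walk_def Esym)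
    then have "p 0 \<in> nbrs V E (p 1)" by (simp add: nbrs_iff)
    then have "deg V E (p 1) > 0" unfolding deg_def using nbrs_fin card_gt_0_iff by blast
    then show ?thesis using deg_le_max[OF \<open>p 1 \<in> V\<close>] by (simp add: dm_def)
  qed
  have "M / (2 * real dm * real n) \<le> (\<Sum>k<n. (e k)\<^sup>2) / (2 * real dm)"
    using S2 dmpos n1 by (simp add: field_simps)
  also have "\<dots> \<le> (\<Sum>k<cc. (b (2*k) + b (2*k+1))) / (2 * real dm)"
    using S3 dmpos by (intro divide_right_mono) auto
  also have "\<dots> = (\<Sum>k<cc. (b (2*k) + b (2*k+1)) / (2 * real dm))" by (simp add: sum_divide_distrib)
  also have "\<dots> \<le> (\<Sum>k<cc. Gam (p (2*k+1)))" by (rule sum_mono) (use GB in auto)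
  finally obtain k where k: "k < cc" "Gam (p (2*k+1)) \<ge> M / (2 * real dm * real n) / real cc"
    using exists_ge_avg[OF cc1] by blast
  have "p (2*k+1) \<in> V" using walk_V[OF w] k(1) by (simp add: cc_def)
  moreover have "M / (2 * real dm * real n) / real cc = M * (1 / (2 * real dm * real n * real cc))" by simp
  ultimately show ?thesis using k(2) unfolding dm_def cc_def by metis
qed

end

context sg begin

lemma sp_cong: "(\<And>k. k \<le> m \<Longrightarrow> p k = q k) \<Longrightarrow> sp p m = sp q m"
  unfolding sp_def by (rule prod.cong) auto

lemma sp_split: "sp p (a + b) = sp p a * sp (\<lambda>k. p (a + k)) b"
  by (induction b) (simp_all add: sp_def)

lemma walk_shift: "walk p n \<Longrightarrow> a + b \<le> n \<Longrightarrow> walk (\<lambda>k. p (a + k)) b"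
  by (simp add: walk_def)

lemma walk_mono: "walk p n \<Longrightarrow> m \<le> n \<Longrightarrow> walk p m"
  by (simp add: walk_def)

lemma cut:
  assumes w: "walk p n" and ij: "i < j" "j \<le> n" and eq: "p i = p j"
  defines "r \<equiv> (\<lambda>k. if k \<le> i then p k else p (k + (j - i)))"
  shows "walk r (n - (j - i))" "r 0 = p 0" "r (n - (j - i)) = p n"
    "sp p n = sp r (n - (j - i)) * sp (\<lambda>k. p (i + k)) (j - i)"
proof -
  show "walk r (n - (j - i))" unfolding walk_def
  proof (intro allI impI)
    fix k assume k: "k < n - (j - i)"
    show "E (r k) (r (Suc k))"
    proof (cases "k < i")
      case True then show ?thesis using w ij k by (simp add: r_def walk_def)
    next
      case False
      then have "r k = p (k + (j - i))" using eq ij by (cases "k = i") (auto simp: r_def)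
      moreover have "r (Suc k) = p (Suc k + (j - i))" using False by (simp add: r_def)
      moreover have "k + (j - i) < n" using k ij by simp
      ultimately show ?thesis using w by (simp add: walk_def)
    qed
  qed
  show "r 0 = p 0" by (simp add: r_def)
  show "r (n - (j - i)) = p n"
  proof (cases "n - (j - i) \<le> i")
    case True
    then have "n = j" using ij by simp
    then have "n - (j - i) = i" using ij by simp
    then show ?thesis using eq \<open>n = j\<close> by (simp add: r_def)
  next
    case False then show ?thesis using ij by (simp add: r_def)
  qed
  have n_eq: "n = i + ((j - i) + (n - j))" using ij by simp
  have "sp p n = sp p i * sp (\<lambda>k. p (i + k)) ((j - i) + (n - j))"
    using sp_split[of p i "(j - i) + (n - j)"] n_eq by simp
  also have "sp (\<lambda>k. p (i + k)) ((j - i) + (n - j)) = sp (\<lambda>k. p (i + k)) (j - i) * sp (\<lambda>k. p (j + k)) (n - j)"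
    using sp_split[of "\<lambda>k. p (i + k)" "j - i" "n - j"] ij by (simp add: add.assoc)
  finally have A: "sp p n = sp p i * sp (\<lambda>k. p (i + k)) (j - i) * sp (\<lambda>k. p (j + k)) (n - j)" by simp
  have "sp r (n - (j - i)) = sp r (i + (n - j))" using ij by (simp add: algebra_simps)
  also have "\<dots> = sp r i * sp (\<lambda>k. r (i + k)) (n - j)" by (rule sp_split)
  also have "sp r i = sp p i" by (rule sp_cong) (simp add: r_def)
  also have "(\<lambda>k. r (i + k)) = (\<lambda>k. p (j + k))"
  proof
    fix k show "r (i + k) = p (j + k)" using eq ij by (cases k) (auto simp: r_def add.commute)
  qed
  finally have B: "sp r (n - (j - i)) = sp p i * sp (\<lambda>k. p (j + k)) (n - j)" .
  show "sp p n = sp r (n - (j - i)) * sp (\<lambda>k. p (i + k)) (j - i)"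
    unfolding A B by (simp add: algebra_simps)
qed

lemma nb_exists:
  assumes "walk p n" "p 0 = x" "P (p n) (sp p n)"
  shows "\<exists>m q. m \<le> n \<and> walk q m \<and> q 0 = x \<and> P (q m) (sp q m) \<and> nb q m"
  using assms
proof (induction n arbitrary: p rule: less_induct)
  case (less n)
  show ?case
  proof (cases "nb p n")
    case True then show ?thesis using less.prems by blast
  next
    case False
    then obtain i where i: "i + 2 \<le> n" "p i = p (i + 2)" by (auto simp: nb_def)
    define r where "r = (\<lambda>k. if k \<le> i then p k else p (k + ((i + 2) - i)))"
    have c1: "walk r (n - ((i+2) - i))" and c2: "r 0 = p 0" and c3: "r (n - ((i+2) - i)) = p n"
      and c4: "sp p n = sp r (n - ((i+2) - i)) * sp (\<lambda>k. p (i + k)) ((i+2) - i)"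
      using cut[OF less.prems(1), of i "i+2"] i unfolding r_def by auto
    have Ei: "E (p i) (p (Suc i))" using less.prems(1) i(1) by (simp add: walk_def)
    have "sp (\<lambda>k. p (i + k)) 2 = \<sigma> (p i) (p (Suc i)) * \<sigma> (p (Suc i)) (p (Suc (Suc i)))"
      by (simp add: sp_def numeral_2_eq_2)
    also have "\<dots> = 1" using i(2) sig_sym[OF Ei] sig_sq[OF Ei] by (simp add: numeral_2_eq_2)
    finally have "sp p n = sp r (n - 2)" using c4 by simp
    then have "P (r (n - 2)) (sp r (n - 2))" using less.prems(3) c3 by simp
    moreover have "n - 2 < n" using i by simp
    ultimately obtain m q where "m \<le> n - 2" "walk q m" "q 0 = x" "P (q m) (sp q m)" "nb q m"
      using less.IH[of "n - 2" r] c1 c2 less.prems(2) by auto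
    then show ?thesis by (intro exI[of _ m] exI[of _ q]) auto
  qed
qed

lemma sp_rev: "walk p m \<Longrightarrow> sp (\<lambda>k. p (m - k)) m = sp p m"
proof (induction m arbitrary: p)
  case 0 then show ?case by (simp add: sp_def)
next
  case (Suc m)
  have "sp (\<lambda>k. p (Suc m - k)) (1 + m) = sp (\<lambda>k. p (Suc m - k)) 1 * sp (\<lambda>k. p (Suc m - (1 + k))) m"
    by (rule sp_split)
  also have "sp (\<lambda>k. p (Suc m - k)) 1 = \<sigma> (p (Suc m)) (p m)" by (simp add: sp_def)
  also have "(\<lambda>k. p (Suc m - (1 + k))) = (\<lambda>k. p (m - k))" by simp
  also have "sp (\<lambda>k. p (m - k)) m = sp p m" using Suc walk_mono[of p "Suc m" m] by simp
  finally show ?case using Suc.prems sig_sym[of "p m" "p (Suc m)"] by (simp add: sp_Suc walk_def)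
qed

lemma walk_from_relpowp: "(E ^^ n) x y \<Longrightarrow> \<exists>p. walk p n \<and> p 0 = x \<and> p n = y"
  by (auto simp: relpowp_fun_conv walk_def)

end

context sg begin

lemma pm1: "\<bar>a::real\<bar> = 1 \<Longrightarrow> a = 1 \<or> a = -1" by linarith

lemma neg_cycle:
  assumes "walk p n" "p n = p 0" "p 0 \<in> V" "sp p n = -1"
  shows "\<not> balanced V E \<sigma>"
  using assms
proof (induction n arbitrary: p rule: less_induct)
  case (less n)
  note w = less.prems(1)
  show ?case
  proof (cases "\<exists>i j. i < j \<and> j < n \<and> p i = p j")
    case True
    then obtain i j where ij: "i < j" "j < n" "p i = p j" by blast
    define r where "r = (\<lambda>k. if k \<le> i then p k else p (k + (j - i)))"
    have c1: "walk r (n - (j - i))" and c2: "r 0 = p 0" and c3: "r (n - (j - i)) = p n"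
      and c4: "sp p n = sp r (n - (j - i)) * sp (\<lambda>k. p (i + k)) (j - i)"
      using cut[OF w, of i j] ij unfolding r_def by auto
    have wq: "walk (\<lambda>k. p (i + k)) (j - i)" using walk_shift[OF w, of i "j - i"] ij by simp
    have a1: "\<bar>sp r (n - (j - i))\<bar> = 1" using sp_abs[OF c1] by simp
    have a2: "\<bar>sp (\<lambda>k. p (i + k)) (j - i)\<bar> = 1" using sp_abs[OF wq] by simp
    have pjV: "p j \<in> V" using walk_V[OF w, of j] ij by simp
    show ?thesis
    proof (cases "sp r (n - (j - i)) = -1")
      case True
      show ?thesis
        by (rule less.IH[of "n - (j - i)" r]) (use ij c1 c2 c3 less.prems True in auto)
    next
      case False
      then have "sp r (n - (j - i)) = 1" using pm1[OF a1] by blast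
      then have "sp (\<lambda>k. p (i + k)) (j - i) = -1" using c4 less.prems(4) by simp
      then show ?thesis
        by (intro less.IH[of "j - i" "\<lambda>k. p (i + k)"]) (use ij wq pjV in auto)
    qed
  next
    case False
    then have dist: "\<And>i j. i < j \<Longrightarrow> j < n \<Longrightarrow> p i \<noteq> p j" by blast
    consider "n = 0" | "n = 1" | "n = 2" | "n \<ge> 3" by linarith
    then show ?thesis
    proof cases
      case 1 then show ?thesis using less.prems by (simp add: sp_def)
    next
      case 2 then show ?thesis using less.prems Eirr by (simp add: walk_def)
    next
      case 3
      have E0: "E (p 0) (p 1)" using w 3 by (simp add: walk_def)
      have "sp p n = \<sigma> (p 0) (p 1) * \<sigma> (p 1) (p 0)"
        using 3 less.prems(2) by (simp add: sp_def numeral_2_eq_2 lessThan_Suc)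
      also have "\<dots> = 1" using sig_sym[OF E0] sig_sq[OF E0] by simp
      finally show ?thesis using less.prems(4) by simp
    next
      case 4
      define cs where "cs = map p [0..<n]"
      have nth: "k < n \<Longrightarrow> cs ! k = p k" for k by (simp add: cs_def)
      have nxt: "k < n \<Longrightarrow> cs ! ((k + 1) mod n) = p (Suc k)" for k
      proof -
        assume k: "k < n"
        show ?thesis
        proof (cases "k + 1 < n")
          case True then show ?thesis by (simp add: nth)
        next
          case False
          then have "k + 1 = n" using k by simp
          then show ?thesis using 4 less.prems(2) nth[of 0] by simp
        qed
      qed
      have "is_cycle V E cs"
        unfolding is_cycle_def
      proof (intro conjI allI impI)
        show "3 \<le> length cs" using 4 by (simp add: cs_def)
        show "distinct cs" unfolding cs_def distinct_map
          using dist by (auto simp: inj_on_def) (metis linorder_neqE_nat)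
        show "set cs \<subseteq> V"
        proof
          fix v assume "v \<in> set cs"
          then obtain k where k: "k < n" "v = p k" by (auto simp: cs_def)
          show "v \<in> V" using k less.prems(3) walk_V[OF w, of k] by (cases "k = 0") auto
        qed
        fix i assume "i < length cs"
        then have i: "i < n" by (simp add: cs_def)
        have lc: "length cs = n" by (simp add: cs_def)
        have "cs ! ((i + 1) mod length cs) = p (Suc i)" using nxt[OF i] lc by simp
        moreover have "cs ! i = p i" using nth[OF i] .
        ultimately show "E (cs ! i) (cs ! ((i + 1) mod length cs))"
          using w i by (simp add: walk_def)
      qed
      moreover have "(\<Prod>i<length cs. \<sigma> (cs ! i) (cs ! ((i + 1) mod length cs))) = sp p n"
        unfolding sp_def
      proof (rule prod.cong)
        show "{..<length cs} = {..<n}" by (simp add: cs_def)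
        fix x assume "x \<in> {..<n}"
        then have x: "x < n" by simp
        have lc: "length cs = n" by (simp add: cs_def)
        show "\<sigma> (cs ! x) (cs ! ((x + 1) mod length cs)) = \<sigma> (p x) (p (Suc x))"
          using nth[OF x] nxt[OF x] lc by simp
      qed
      ultimately show ?thesis using less.prems(4) unfolding balanced_def by fastforce
    qed
  qed
qed

lemma short_walk:
  assumes conn: "connected_graph V E" and xy: "x \<in> V" "y \<in> V"
  shows "\<exists>p n. walk p n \<and> p 0 = x \<and> p n = y \<and> n \<le> diameter V E"
proof -
  have "E\<^sup>*\<^sup>* x y" using conn xy by (simp add: connected_graph_def)
  then obtain n0 where "(E ^^ n0) x y" using rtranclp_imp_relpowp by metis
  then have g: "(E ^^ gdist V E x y) x y" unfolding gdist_def by (rule LeastI)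
  have fin: "finite {gdist V E a b | a b. a \<in> V \<and> b \<in> V}"
    by (rule finite_subset[of _ "(\<lambda>(a, b). gdist V E a b) ` (V \<times> V)"]) (auto simp: finV)
  have "gdist V E x y \<le> diameter V E"
    unfolding diameter_def using xy by (intro Max_ge[OF fin]) blast
  then show ?thesis using walk_from_relpowp[OF g] by blast
qed

end

context eig2 begin

lemma path_exist:
  assumes conn: "connected_graph V E" and xs: "xs \<in> V" and c: "\<bar>c\<bar> = 1"
  shows "\<exists>p n. walk p n \<and> p 0 = xs \<and> c * sp p n * f (p n) \<le> 0 \<and>
           (n \<le> diameter V E \<or> (n \<le> diameter V E + 1 \<and> \<not> balanced V E \<sigma>))"
proof -
  define D where "D = diameter V E"
  have "\<forall>y\<in>V. \<exists>pn. walk (fst pn) (snd pn) \<and> fst pn 0 = xs \<and> fst pn (snd pn) = y \<and> snd pn \<le> D"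
  proof
    fix y assume "y \<in> V"
    then obtain p n where "walk p n \<and> p 0 = xs \<and> p n = y \<and> n \<le> D"
      using short_walk[OF conn xs] unfolding D_def by blast
    then show "\<exists>pn. walk (fst pn) (snd pn) \<and> fst pn 0 = xs \<and> fst pn (snd pn) = y \<and> snd pn \<le> D"
      by (intro exI[of _ "(p, n)"]) simp
  qed
  from bchoice[OF this] obtain PN where PN: "\<forall>y\<in>V. walk (fst (PN y)) (snd (PN y)) \<and> fst (PN y) 0 = xs \<and>
      fst (PN y) (snd (PN y)) = y \<and> snd (PN y) \<le> D" ..
  define P where "P y = fst (PN y)" for y
  define L where "L y = snd (PN y)" for y
  have Pw: "walk (P y) (L y)" "P y 0 = xs" "P y (L y) = y" "L y \<le> D" if "y \<in> V" for y
    using PN that unfolding P_def L_def by auto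
  define \<tau> where "\<tau> y = c * sp (P y) (L y)" for y
  have tabs: "\<bar>\<tau> y\<bar> = 1" if "y \<in> V" for y
    using sp_abs[OF Pw(1)[OF that], of "L y"] c by (simp add: \<tau>_def abs_mult)
  have tsq: "\<tau> y * \<tau> y = 1" if "y \<in> V" for y
    using pm1[OF tabs[OF that]] by auto
  show ?thesis
  proof (cases "\<exists>y\<in>V. \<tau> y * f y \<le> 0")
    case True
    then obtain y where y: "y \<in> V" "\<tau> y * f y \<le> 0" by blast
    show ?thesis
      by (rule exI[of _ "P y"], rule exI[of _ "L y"]) (use Pw[OF y(1)] y(2) in \<open>auto simp: \<tau>_def D_def\<close>)
  next
    case False
    then have pos: "\<And>y. y \<in> V \<Longrightarrow> \<tau> y * f y > 0" by force
    show ?thesis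
    proof (cases "\<exists>u v. E u v \<and> \<tau> u * \<sigma> u v * \<tau> v \<noteq> 1")
      case True
      then obtain u v where uv: "E u v" "\<tau> u * \<sigma> u v * \<tau> v \<noteq> 1" by blast
      have uV: "u \<in> V" and vV: "v \<in> V" using EV[OF uv(1)] by auto
      have "\<bar>\<tau> u * \<sigma> u v * \<tau> v\<bar> = 1" using tabs[OF uV] tabs[OF vV] sig_abs[OF uv(1)] by (simp add: abs_mult)
      then have neg: "\<tau> u * \<sigma> u v * \<tau> v = -1" using pm1 uv(2) by blast
      then have "(\<tau> u * \<sigma> u v * \<tau> v) * \<tau> v = - \<tau> v" by simp
      then have "\<tau> u * \<sigma> u v * (\<tau> v * \<tau> v) = - \<tau> v" by (metis mult.assoc)
      then have key: "\<tau> u * \<sigma> u v = - \<tau> v" using tsq[OF vV] by simp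
      define p' where "p' = (P u)(Suc (L u) := v)"
      have wp': "walk p' (Suc (L u))" unfolding walk_def
      proof (intro allI impI)
        fix i assume i: "i < Suc (L u)"
        show "E (p' i) (p' (Suc i))"
        proof (cases "i < L u")
          case True then show ?thesis using Pw(1)[OF uV] by (simp add: p'_def walk_def)
        next
          case False then have "i = L u" using i by simp
          then show ?thesis using Pw(3)[OF uV] uv(1) by (simp add: p'_def)
        qed
      qed
      have "sp p' (Suc (L u)) = sp p' (L u) * \<sigma> (p' (L u)) (p' (Suc (L u)))" by (rule sp_Suc)
      also have "sp p' (L u) = sp (P u) (L u)" by (rule sp_cong) (simp add: p'_def)
      also have "\<sigma> (p' (L u)) (p' (Suc (L u))) = \<sigma> u v" using Pw(3)[OF uV] by (simp add: p'_def)
      finally have spp: "sp p' (Suc (L u)) = sp (P u) (L u) * \<sigma> u v" .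
      have endv: "c * sp p' (Suc (L u)) * f (p' (Suc (L u))) \<le> 0"
      proof -
        have "c * sp p' (Suc (L u)) * f (p' (Suc (L u))) = \<tau> u * \<sigma> u v * f v"
          unfolding spp by (simp add: p'_def \<tau>_def)
        also have "\<dots> = - (\<tau> v * f v)" using key by simp
        finally show ?thesis using pos[OF vV] by simp
      qed
      define T where "T = L u + (1 + L v)"
      define w where "w k = (if k \<le> L u then P u k else P v (T - k))" for k
      have ww: "walk w T" unfolding walk_def
      proof (intro allI impI)
        fix i assume i: "i < T"
        show "E (w i) (w (Suc i))"
        proof (cases "i < L u")
          case True then show ?thesis using Pw(1)[OF uV] by (simp add: w_def walk_def)
        next
          case False
          show ?thesis
          proof (cases "i = L u")
            case True
            then show ?thesis using Pw(3)[OF uV] Pw(3)[OF vV] uv(1) by (simp add: w_def T_def)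
          next
            case False
            define j where "j = T - Suc i"
            have j: "j < L v" "Suc j = T - i" using i \<open>\<not> i < L u\<close> False by (auto simp: j_def T_def)
            have "E (P v j) (P v (Suc j))" using Pw(1)[OF vV] j(1) by (simp add: walk_def)
            then have "E (P v (T - i)) (P v (T - Suc i))" using Esym j by (simp add: j_def)
            then show ?thesis using \<open>\<not> i < L u\<close> False by (simp add: w_def)
          qed
        qed
      qed
      have wT: "w T = w 0" using Pw(2)[OF vV] Pw(2)[OF uV] by (simp add: w_def T_def)
      have w0: "w 0 \<in> V" using Pw(2)[OF uV] xs by (simp add: w_def)
      have "sp w T = sp w (L u) * sp (\<lambda>k. w (L u + k)) (1 + L v)" unfolding T_def by (rule sp_split)
      also have "sp w (L u) = sp (P u) (L u)" by (rule sp_cong) (simp add: w_def)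
      also have "sp (\<lambda>k. w (L u + k)) (1 + L v) = sp (\<lambda>k. w (L u + k)) 1 * sp (\<lambda>k. w (L u + (1 + k))) (L v)"
        by (rule sp_split)
      also have "sp (\<lambda>k. w (L u + k)) 1 = \<sigma> u v"
        using Pw(3)[OF uV] Pw(3)[OF vV] by (simp add: sp_def w_def T_def)
      also have "sp (\<lambda>k. w (L u + (1 + k))) (L v) = sp (\<lambda>k. P v (L v - k)) (L v)"
        by (rule sp_cong) (simp add: w_def T_def)
      also have "\<dots> = sp (P v) (L v)" by (rule sp_rev[OF Pw(1)[OF vV]])
      finally have "sp w T = sp (P u) (L u) * (\<sigma> u v * sp (P v) (L v))" .
      moreover have "\<tau> u * \<sigma> u v * \<tau> v = (c * c) * (sp (P u) (L u) * (\<sigma> u v * sp (P v) (L v)))"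
        by (simp add: \<tau>_def algebra_simps)
      moreover have "c * c = 1" using pm1[OF c] by auto
      ultimately have "sp w T = -1" using neg by simp
      then have nbal: "\<not> balanced V E \<sigma>" using neg_cycle[OF ww wT w0] by simp
      show ?thesis
        by (rule exI[of _ p'], rule exI[of _ "Suc (L u)"])
           (use wp' endv Pw[OF uV] nbal in \<open>auto simp: p'_def D_def\<close>)
    next
      case False
      then have cons: "\<And>u v. E u v \<Longrightarrow> \<tau> u * \<sigma> u v * \<tau> v = 1" by blast
      define g where "g y = \<tau> y * f y" for y
      have "Min (g ` V) \<in> g ` V" using finV Vne by simp
      then obtain m where m: "m \<in> V" "g m = Min (g ` V)" by (metis imageE)
      have gmin: "\<And>y. y \<in> V \<Longrightarrow> g m \<le> g y" using m finV by simp
      have "\<tau> m * slap V E \<sigma> f m = (1 / real (deg V E m)) * (\<tau> m * (\<Sum>y\<in>nbrs V E m. \<sigma> m y * f y - f m))"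
        unfolding slap_def by (simp only: mult.left_commute)
      also have "\<tau> m * (\<Sum>y\<in>nbrs V E m. \<sigma> m y * f y - f m) = (\<Sum>y\<in>nbrs V E m. g y - g m)"
        unfolding sum_distrib_left
      proof (rule sum.cong)
        fix y assume y: "y \<in> nbrs V E m"
        then have Emy: "E m y" by (simp add: nbrs_iff)
        have yV: "y \<in> V" using EV[OF Emy] by simp
        have "(\<tau> m * \<sigma> m y * \<tau> y) * \<tau> y = \<tau> y" using cons[OF Emy] by simp
        then have "\<tau> m * \<sigma> m y * (\<tau> y * \<tau> y) = \<tau> y" by (metis mult.assoc)
        then have "\<tau> m * \<sigma> m y = \<tau> y" using tsq[OF yV] by simp
        then show "\<tau> m * (\<sigma> m y * f y - f m) = g y - g m" by (simp add: g_def algebra_simps)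
      qed simp
      also have "(1 / real (deg V E m)) * (\<Sum>y\<in>nbrs V E m. g y - g m) \<ge> 0"
        by (intro mult_nonneg_nonneg sum_nonneg) (auto simp: nbrs_def gmin)
      finally have "\<tau> m * slap V E \<sigma> f m \<ge> 0" .
      then have "- lam * g m \<ge> 0" unfolding slap_f_pt g_def by (simp add: algebra_simps)
      moreover have "lam * g m > 0" using lam_pos pos[OF m(1)] by (simp add: g_def)
      ultimately show ?thesis by simp
    qed
  qed
qed

end

lemma ceil_half: "real_of_int \<lceil>real m / 2\<rceil> = real ((m + 1) div 2)"
proof -
  obtain k where "m = 2 * k \<or> m = 2 * k + 1" by (metis odd_two_times_div_two_succ even_two_times_div_two)
  then have "\<lceil>real m / 2\<rceil> = int ((m + 1) div 2)"
    by (auto simp: ceiling_eq_iff)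
  then show ?thesis by simp
qed

context sg begin

lemma slap_add: "slap V E \<sigma> (\<lambda>z. g z + h z) x = slap V E \<sigma> g x + slap V E \<sigma> h x"
proof -
  have "(\<Sum>y\<in>nbrs V E x. \<sigma> x y * (g y + h y) - (g x + h x)) = (\<Sum>y\<in>nbrs V E x. \<sigma> x y * g y - g x) + (\<Sum>y\<in>nbrs V E x. \<sigma> x y * h y - h x)"
    by (simp add: sum.distrib[symmetric] algebra_simps)
  then show ?thesis by (simp add: slap_def algebra_simps)
qed

lemma eigen_lin:
  assumes "f1 \<in> eigenspace V E \<sigma> mu" "g1 \<in> eigenspace V E \<sigma> mu"
  shows "(\<lambda>x. a * f1 x + b * g1 x) \<in> eigenspace V E \<sigma> mu"
proof -
  have sl: "slap V E \<sigma> (\<lambda>x. a * f1 x + b * g1 x) x = a * slap V E \<sigma> f1 x + b * slap V E \<sigma> g1 x" for x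
    using slap_add[of "\<lambda>x. a * f1 x" "\<lambda>x. b * g1 x" x] slap_lin by simp
  show ?thesis unfolding eigenspace_def
  proof (safe)
    fix x assume "x \<notin> V" then show "a * f1 x + b * g1 x = 0" using assms by (simp add: eigenspace_def)
  next
    fix x assume x: "x \<in> V"
    have e1: "- slap V E \<sigma> f1 x = mu * f1 x" and e2: "- slap V E \<sigma> g1 x = mu * g1 x"
      using assms x by (auto simp: eigenspace_def)
    have "- slap V E \<sigma> (\<lambda>x. a * f1 x + b * g1 x) x = a * (- slap V E \<sigma> f1 x) + b * (- slap V E \<sigma> g1 x)"
      unfolding sl by simp
    also have "\<dots> = mu * (a * f1 x + b * g1 x)" unfolding e1 e2 by (simp add: algebra_simps)
    finally show "- slap V E \<sigma> (\<lambda>x. a * f1 x + b * g1 x) x = mu * (a * f1 x + b * g1 x)" .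
  qed
qed

end

context eig2 begin

lemma final_bound:
  assumes cd: "CD V E \<sigma> K N" and Npos: "N > 0" and eps: "\<epsilon> > 0"
    and Qpos: "(2 + \<epsilon>)\<^sup>2 - 4 * invN N > 0"
    and pc: "\<And>xs c. xs \<in> V \<Longrightarrow> (f xs)\<^sup>2 = M \<Longrightarrow> \<bar>c\<bar> = 1 \<Longrightarrow> c * f xs > 0 \<Longrightarrow>
        (\<exists>p n. walk p n \<and> p 0 = xs \<and> n \<le> L \<and> c * sp p n * f (p n) \<le> 0)"
  shows "lam \<ge> \<epsilon> / ((2 + \<epsilon>)\<^sup>2 - 4 * invN N) *
            (1 / (real (max_deg V E) * real L * real_of_int \<lceil>real L / 2\<rceil>))
          + 2 * (2 + \<epsilon>) / ((2 + \<epsilon>)\<^sup>2 - 4 * invN N) * K"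
proof -
  define Q where "Q = (2 + \<epsilon>)\<^sup>2 - 4 * invN N"
  define dm where "dm = max_deg V E"
  define X where "X = real dm * real L * real_of_int \<lceil>real L / 2\<rceil>"
  define G where "G = 1 / (2 * X)"
  obtain xs where xs: "xs \<in> V" "(f xs)\<^sup>2 = M" using M_attained by auto
  have fxs: "f xs \<noteq> 0" using xs M_pos by auto
  define c :: real where "c = (if f xs > 0 then 1 else -1)"
  have c: "\<bar>c\<bar> = 1" "c * f xs > 0" using fxs by (auto simp: c_def)
  obtain p n where pn: "walk p n" "p 0 = xs" "n \<le> L" "c * sp p n * f (p n) \<le> 0"
    using pc[OF xs c] by blast
  obtain m q where mq: "m \<le> n" "walk q m" "q 0 = xs" "c * sp q m * f (q m) \<le> 0" "nb q m"
    using nb_exists[OF pn(1) pn(2), of "\<lambda>v s. c * s * f v \<le> 0"] pn(4) by auto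
  have m1: "m \<ge> 1"
  proof (rule ccontr)
    assume "\<not> m \<ge> 1" then have "m = 0" by simp
    then show False using mq(3,4) c(2) by (simp add: sp_def)
  qed
  obtain x where x: "x \<in> V" "Gam x \<ge> M * (1 / (2 * real dm * real m * real ((m + 1) div 2)))"
    using path_gamma[OF mq(2) mq(5) m1 mq(3) xs c mq(4)] unfolding dm_def by blast
  have path: "\<exists>x\<in>V. Gam x \<ge> M * G"
  proof (cases "dm = 0")
    case True
    then have "G = 0" by (simp add: G_def X_def)
    then show ?thesis using x(1) Gamma_nonneg[of f x] by auto
  next
    case False
    have mL: "m \<le> L" using mq(1) pn(3) by simp
    have cm: "real ((m + 1) div 2) = real_of_int \<lceil>real m / 2\<rceil>" using ceil_half by simp
    have cpos: "real ((m + 1) div 2) > 0" using m1 by simp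
    have cle: "real_of_int \<lceil>real m / 2\<rceil> \<le> real_of_int \<lceil>real L / 2\<rceil>"
      using mL by (simp add: ceiling_mono divide_right_mono)
    have "real m * real ((m + 1) div 2) \<le> real L * real_of_int \<lceil>real L / 2\<rceil>"
      using mL cle cm cpos by (intro mult_mono) auto
    then have BA: "2 * real dm * (real m * real ((m + 1) div 2)) \<le> 2 * real dm * (real L * real_of_int \<lceil>real L / 2\<rceil>)"
      by (intro mult_left_mono) auto
    have Bp: "0 < 2 * real dm * (real m * real ((m + 1) div 2))" using False m1 cpos by simp
    have Ap: "0 < 2 * real dm * (real L * real_of_int \<lceil>real L / 2\<rceil>)" using BA Bp by linarith
    have "1 / (2 * real dm * (real L * real_of_int \<lceil>real L / 2\<rceil>)) \<le> 1 / (2 * real dm * (real m * real ((m + 1) div 2)))"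
      by (rule divide_left_mono[OF BA]) (simp, rule mult_pos_pos[OF Ap Bp])
    then have "G \<le> 1 / (2 * real dm * real m * real ((m + 1) div 2))"
      by (simp add: G_def X_def mult.assoc)
    then have "M * G \<le> M * (1 / (2 * real dm * real m * real ((m + 1) div 2)))"
      using M_pos by (intro mult_left_mono) auto
    then show ?thesis using x by force
  qed
  have "lam * Q \<ge> 2 * \<epsilon> * G + 2 * (2 + \<epsilon>) * K"
    using core[OF cd Npos eps path] by (simp add: Q_def)
  moreover have "2 * \<epsilon> * G = \<epsilon> * (1 / X)" by (simp add: G_def)
  ultimately have "\<epsilon> * (1 / X) + 2 * (2 + \<epsilon>) * K \<le> lam * Q" by simp
  then have "(\<epsilon> * (1 / X) + 2 * (2 + \<epsilon>) * K) / Q \<le> lam"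
    using Qpos by (simp add: Q_def pos_divide_le_eq)
  moreover have "(\<epsilon> * (1 / X) + 2 * (2 + \<epsilon>) * K) / Q = \<epsilon> / Q * (1 / X) + 2 * (2 + \<epsilon>) / Q * K"
    unfolding divide_inverse by (simp add: algebra_simps)
  ultimately have fin: "\<epsilon> / Q * (1 / X) + 2 * (2 + \<epsilon>) / Q * K \<le> lam" by simp
  show ?thesis using fin unfolding Q_def X_def dm_def .
qed

end

theorem theorem3p4:
  fixes V :: "'a set" and E :: "'a \<Rightarrow> 'a \<Rightarrow> bool" and \<sigma> :: "'a \<Rightarrow> 'a \<Rightarrow> real"
    and \<epsilon> K lam :: real and N :: ereal
  assumes "simple_graph V E" and "connected_graph V E" and "signature V E \<sigma>"
    and "\<epsilon> > 0" and "N > 0" and "N > ereal (4 / (2 + \<epsilon>)\<^sup>2)"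
    and "CD V E \<sigma> K N"
    and "is_eigenvalue V E \<sigma> lam" and "lam \<noteq> 0"
  shows "(lam \<ge> \<epsilon> / ((2 + \<epsilon>)\<^sup>2 - 4 * invN N) *
            (1 / (real (max_deg V E) * real (diameter V E + 1)
                  * real_of_int \<lceil>real (diameter V E + 1) / 2\<rceil>))
          + 2 * (2 + \<epsilon>) / ((2 + \<epsilon>)\<^sup>2 - 4 * invN N) * K) \<and>
         ((mult_ge2 V E \<sigma> lam \<or> balanced V E \<sigma>) \<longrightarrow>
         lam \<ge> \<epsilon> / ((2 + \<epsilon>)\<^sup>2 - 4 * invN N) *
            (1 / (real (max_deg V E) * real (diameter V E)
                  * real_of_int \<lceil>real (diameter V E) / 2\<rceil>))
          + 2 * (2 + \<epsilon>) / ((2 + \<epsilon>)\<^sup>2 - 4 * invN N) * K)"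
proof -
  note conn = assms(2) and eps = assms(4) and Npos = assms(5) and cd = assms(7)
  interpret sg V E \<sigma> by unfold_locales (rule assms(1), rule assms(3))
  from assms(8) obtain f where fE: "f \<in> eigenspace V E \<sigma> lam" "f \<noteq> (\<lambda>_. 0)"
    unfolding is_eigenvalue_def by blast
  have fne: "\<exists>x\<in>V. f x \<noteq> 0"
  proof (rule ccontr)
    assume "\<not> (\<exists>x\<in>V. f x \<noteq> 0)"
    then have "\<forall>x. f x = 0" using fE(1) by (auto simp: eigenspace_def)
    then show False using fE(2) by auto
  qed
  interpret e: eig2 V E \<sigma> f lam by unfold_locales (use fE fne assms(9) in auto)
  have Qpos: "(2 + \<epsilon>)\<^sup>2 - 4 * invN N > 0"
  proof (cases N)
    case (real r)
    have ep: "(2 + \<epsilon>)\<^sup>2 > 0" using eps by simp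
    have r: "r > 4 / (2 + \<epsilon>)\<^sup>2" using assms(6) real by simp
    moreover have "4 / (2 + \<epsilon>)\<^sup>2 > 0" using ep by simp
    ultimately have rp: "r > 0" by linarith
    have "4 < r * (2 + \<epsilon>)\<^sup>2" using r ep by (simp add: pos_divide_less_eq)
    then have "4 / r < (2 + \<epsilon>)\<^sup>2" using rp by (simp add: divide_less_eq mult.commute)
    then show ?thesis using real by (simp add: invN_def)
  next
    case PInf then show ?thesis using eps by (simp add: invN_def)
  next
    case MInf then show ?thesis using Npos by simp
  qed
  have part1: "lam \<ge> \<epsilon> / ((2 + \<epsilon>)\<^sup>2 - 4 * invN N) *
            (1 / (real (max_deg V E) * real (diameter V E + 1)
                  * real_of_int \<lceil>real (diameter V E + 1) / 2\<rceil>))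
          + 2 * (2 + \<epsilon>) / ((2 + \<epsilon>)\<^sup>2 - 4 * invN N) * K"
  proof (rule e.final_bound[OF cd Npos eps Qpos])
    fix xs c assume xs: "xs \<in> V" and c: "\<bar>c\<bar> = (1::real)"
    obtain p n where "walk p n" "p 0 = xs" "c * sp p n * f (p n) \<le> 0"
      "n \<le> diameter V E \<or> (n \<le> diameter V E + 1 \<and> \<not> balanced V E \<sigma>)"
      using e.path_exist[OF conn xs c] by blast
    then show "\<exists>p n. walk p n \<and> p 0 = xs \<and> n \<le> diameter V E + 1 \<and> c * sp p n * f (p n) \<le> 0"
      by (intro exI[of _ p] exI[of _ n]) auto
  qed
  have part2: "lam \<ge> \<epsilon> / ((2 + \<epsilon>)\<^sup>2 - 4 * invN N) *
            (1 / (real (max_deg V E) * real (diameter V E)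
                  * real_of_int \<lceil>real (diameter V E) / 2\<rceil>))
          + 2 * (2 + \<epsilon>) / ((2 + \<epsilon>)\<^sup>2 - 4 * invN N) * K"
    if hyp: "mult_ge2 V E \<sigma> lam \<or> balanced V E \<sigma>"
  proof (cases "balanced V E \<sigma>")
    case True
    show ?thesis
    proof (rule e.final_bound[OF cd Npos eps Qpos])
      fix xs c assume xs: "xs \<in> V" and c: "\<bar>c\<bar> = (1::real)"
      obtain p n where "walk p n" "p 0 = xs" "c * sp p n * f (p n) \<le> 0"
        "n \<le> diameter V E \<or> (n \<le> diameter V E + 1 \<and> \<not> balanced V E \<sigma>)"
        using e.path_exist[OF conn xs c] by blast
      then show "\<exists>p n. walk p n \<and> p 0 = xs \<and> n \<le> diameter V E \<and> c * sp p n * f (p n) \<le> 0"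
        using True by (intro exI[of _ p] exI[of _ n]) auto
    qed
  next
    case False
    then have "mult_ge2 V E \<sigma> lam" using hyp by blast
    then obtain f1 g1 where fg: "f1 \<in> eigenspace V E \<sigma> lam" "g1 \<in> eigenspace V E \<sigma> lam"
      and ind: "\<And>a b::real. (\<forall>x. a * f1 x + b * g1 x = 0) \<Longrightarrow> a = 0 \<and> b = 0"
      unfolding mult_ge2_def by blast
    obtain z where z: "z \<in> V" using Vne by auto
    define h where "h = (if f1 z \<noteq> 0 \<or> g1 z \<noteq> 0 then (\<lambda>x. g1 z * f1 x + (- f1 z) * g1 x) else f1)"
    have hE: "h \<in> eigenspace V E \<sigma> lam"
      using eigen_lin[OF fg, of "g1 z" "- f1 z"] fg(1) unfolding h_def by simp
    have hz: "h z = 0" by (simp add: h_def)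
    have hne: "\<exists>x\<in>V. h x \<noteq> 0"
    proof (rule ccontr)
      assume "\<not> (\<exists>x\<in>V. h x \<noteq> 0)"
      then have h0: "\<forall>x. h x = 0" using hE by (auto simp: eigenspace_def)
      show False
      proof (cases "f1 z \<noteq> 0 \<or> g1 z \<noteq> 0")
        case True
        have "\<forall>x. g1 z * f1 x + (- f1 z) * g1 x = 0"
        proof
          fix x
          have hdef: "h = (\<lambda>x. g1 z * f1 x + (- f1 z) * g1 x)" using True by (simp only: h_def if_True)
          have "h x = 0" using h0 by simp
          then show "g1 z * f1 x + (- f1 z) * g1 x = 0" unfolding hdef .
        qed
        then have "g1 z = 0 \<and> - f1 z = 0" by (rule ind)
        then show False using True by simp
      next
        case False
        have "\<forall>x. 1 * f1 x + 0 * g1 x = 0"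
        proof
          fix x
          have hdef: "h = f1" using False by (simp only: h_def if_False)
          have "h x = 0" using h0 by simp
          then show "1 * f1 x + 0 * g1 x = 0" unfolding hdef by simp
        qed
        then have "(1::real) = 0 \<and> (0::real) = 0" by (rule ind)
        then show False by simp
      qed
    qed
    interpret e2: eig2 V E \<sigma> h lam by unfold_locales (use hE hne assms(9) in auto)
    show ?thesis
    proof (rule e2.final_bound[OF cd Npos eps Qpos])
      fix xs c assume xs: "xs \<in> V" and c: "\<bar>c\<bar> = (1::real)"
      obtain p n where "walk p n" "p 0 = xs" "p n = z" "n \<le> diameter V E"
        using short_walk[OF conn xs z] by blast
      then show "\<exists>p n. walk p n \<and> p 0 = xs \<and> n \<le> diameter V E \<and> c * sp p n * h (p n) \<le> 0"
        using hz by (intro exI[of _ p] exI[of _ n]) auto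
    qed
  qed
  show ?thesis
    by (intro conjI impI part1 part2)
qed

end
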